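(* Let $x\in\mathbb{R}^n$ and let $\widehat{L}=L-P_{T_z}LP_{T_x^\perp}$ be its effective lifting operator. Then (i) $\widehat{L}$ has full column rank; (ii) for every $u\in\partial\|\cdot\|_{1,2}(Lx)$ (the subdifferential of $\|\cdot\|_{1,2}$ at the point $Lx$), one has $(P_{T_z}LP_{T_x^\perp})^\top u=0$ and $L^\top u=\widehat{L}^\top u$.
   Context: Let $n,N\in\mathbb{N}$, let $G_1,\dots,G_N\subseteq\{1,\dots,n\}$ be nonempty groups, possibly overlapping, with $\bigcup_iG_i=\{1,\dots,n\}$, and weights $w_i>0$. $x_G$ is the subvector of $x$ indexed by $G$ (increasing order). Let $p=\sum_i|G_i|$, partition $\{1,\dots,p\}$ into consecutive blocks $J_i=\{\sum_{j<i}|G_j|+1,\dots,\sum_{j\le i}|G_j|\}$, and define $L\in\mathbb{R}^{p\times n}$ by $(Lx)_{J_i}=w_ix_{G_i}$. For $z\in\mathbb{R}^p$, $\|z\|_{1,2}=\sum_i\|z_{J_i}\|$ (Euclidean); $u\in\partial\|\cdot\|_{1,2}(z)$ iff $u_{J_i}=z_{J_i}/\|z_{J_i}\|$ when $z_{J_i}\ne0$ and $\|u_{J_i}\|\le1$ when $z_{J_i}=0$. For $x\in\mathbb{R}^n$: $\mathcal{I}_x=\{t:x_{G_t}\ne0\}$; $\mathcal{E}_x=\{1,\dots,n\}\setminus\bigcup_{t\notin\mathcal{I}_x}G_t$, $T_x=\{x'\in\mathbb{R}^n:\mathrm{supp}(x')\subseteq\mathcal{E}_x\}$; $\mathcal{E}_z=\bigcup_{t\in\mathcal{I}_x}J_t$,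 $T_z=\{z'\in\mathbb{R}^p:\mathrm{supp}(z')\subseteq\mathcal{E}_z\}$. $P_T$ is the orthogonal (coordinate) projection onto $T$, $T^\perp$ the orthogonal complement. *)

theory Defs
  imports "Jordan_Normal_Form.DL_Rank"
begin

text \<open>Conventions: all indices are 0-based (Jordan_Normal_Form matrices/vectors).
  Coordinates of R^n are 0..<n, groups are indexed by 0..<N, G i is a subset of {0..<n}.\<close>

definition offs :: "(nat \<Rightarrow> nat set) \<Rightarrow> nat \<Rightarrow> nat" where
  "offs G i = (\<Sum>j<i. card (G j))"

definition blk :: "(nat \<Rightarrow> nat set) \<Rightarrow> nat \<Rightarrow> nat set" where
  "blk G i = {offs G i ..< offs G i + card (G i)}"

text \<open>Lifting operator L in R^{p x n}: (L x)_{J_i} = w_i x_{G_i} (G_i listed increasingly).\<close>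
definition lift_mat :: "nat \<Rightarrow> nat \<Rightarrow> (nat \<Rightarrow> nat set) \<Rightarrow> (nat \<Rightarrow> real) \<Rightarrow> real mat" where
  "lift_mat n N G w = mat (offs G N) n (\<lambda>(k, j).
      \<Sum>i<N. (if k \<in> blk G i \<and> j = sorted_list_of_set (G i) ! (k - offs G i) then w i else 0))"

definition blk_norm :: "(nat \<Rightarrow> nat set) \<Rightarrow> real vec \<Rightarrow> nat \<Rightarrow> real" where
  "blk_norm G z i = sqrt (\<Sum>k\<in>blk G i. (z $ k)\<^sup>2)"

text \<open>Subdifferential of the l_{1,2} norm at z (as characterized in the paper).\<close>
definition subdiff12 :: "nat \<Rightarrow> (nat \<Rightarrow> nat set) \<Rightarrow> real vec \<Rightarrow> real vec set" where
  "subdiff12 N G z = {u \<in> carrier_vec (offs G N). \<forall>i<N.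
      (if (\<exists>k\<in>blk G i. z $ k \<noteq> 0)
       then (\<forall>k\<in>blk G i. u $ k = z $ k / blk_norm G z i)
       else blk_norm G u i \<le> 1)}"

definition active_grps :: "nat \<Rightarrow> (nat \<Rightarrow> nat set) \<Rightarrow> real vec \<Rightarrow> nat set" where
  "active_grps N G x = {t. t < N \<and> (\<exists>j\<in>G t. x $ j \<noteq> 0)}"

text \<open>E_x: support set of the model subspace T_x.\<close>
definition Ex_set :: "nat \<Rightarrow> nat \<Rightarrow> (nat \<Rightarrow> nat set) \<Rightarrow> real vec \<Rightarrow> nat set" where
  "Ex_set n N G x = {0..<n} - (\<Union>t\<in>{t. t < N \<and> t \<notin> active_grps N G x}. G t)"

text \<open>E_z: support set of T_z.\<close>
definition Ez_set :: "nat \<Rightarrow> (nat \<Rightarrow> nat set) \<Rightarrow> real vec \<Rightarrow> nat set" where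
  "Ez_set N G x = (\<Union>t\<in>active_grps N G x. blk G t)"

definition coord_proj :: "nat \<Rightarrow> nat set \<Rightarrow> real mat" where
  "coord_proj d E = mat d d (\<lambda>(i, j). if i = j \<and> i \<in> E then 1 else 0)"

definition full_column_rank :: "real mat \<Rightarrow> bool" where
  "full_column_rank A \<longleftrightarrow> vec_space.rank (dim_row A) A = dim_col A"

end

theory Submission imports Defs begin

lemma cp_carrier: "coord_proj d E \<in> carrier_mat d d"
  by (simp add: coord_proj_def)

lemma cp_left:
  assumes "A \<in> carrier_mat d m" "k < d" "j < m"
  shows "(coord_proj d E * A) $$ (k, j) = (if k \<in> E then A $$ (k, j) else 0)"
proof -
  have "(coord_proj d E * A) $$ (k, j) = (\<Sum>l\<in>{0..<d}. (if k = l \<and> k \<in> E then 1 else 0) * A $$ (l, j))"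
    using assms by (simp add: coord_proj_def scalar_prod_def)
  also have "\<dots> = (if k \<in> E then A $$ (k, j) else 0)"
    using assms(2) by (simp add: if_distrib if_distribR sum.delta cong: if_cong)
  finally show ?thesis .
qed

lemma cp_right:
  assumes "A \<in> carrier_mat d m" "k < d" "j < m"
  shows "(A * coord_proj m E) $$ (k, j) = (if j \<in> E then A $$ (k, j) else 0)"
proof -
  have "(A * coord_proj m E) $$ (k, j) = (\<Sum>l\<in>{0..<m}. A $$ (k, l) * (if l = j \<and> l \<in> E then 1 else 0))"
    using assms by (simp add: coord_proj_def scalar_prod_def)
  also have "\<dots> = (if j \<in> E then A $$ (k, j) else 0)"
  proof -
    have "(\<Sum>l\<in>{0..<m}. A $$ (k, l) * (if l = j \<and> l \<in> E then 1 else 0)) = (\<Sum>l\<in>{0..<m}. if l = j then (if j \<in> E then A $$ (k, j) else 0) else 0)"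
      by (rule sum.cong) auto
    then show ?thesis using assms(3) by simp
  qed
  finally show ?thesis .
qed

lemma full_rank_crit:
  assumes A: "(A :: real mat) \<in> carrier_mat nr nc"
    and H: "\<And>j. j < nc \<Longrightarrow> \<exists>k<nr. A $$ (k, j) \<noteq> 0 \<and> (\<forall>j'<nc. j' \<noteq> j \<longrightarrow> A $$ (k, j') = 0)"
  shows "vec_space.rank nr A = nc"
proof -
  have dist: "distinct (cols A)"
  proof -
    have "col A j \<noteq> col A j'" if jj: "j < nc" "j' < nc" "j \<noteq> j'" for j j'
    proof
      assume e: "col A j = col A j'"
      obtain k where k: "k < nr" "A $$ (k, j) \<noteq> 0" "\<forall>j''<nc. j'' \<noteq> j \<longrightarrow> A $$ (k, j'') = 0"
        using H[OF jj(1)] by blast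
      have "col A j $ k = col A j' $ k" using e by simp
      then show False using k jj A by auto
    qed
    then show ?thesis using A unfolding distinct_conv_nth by (simp add: cols_def)
  qed
  have li: "module.lin_indpt class_ring (module_vec TYPE(real) nr) (set (cols A))"
  proof (rule ccontr)
    assume "\<not> ?thesis"
    then obtain v where v: "v \<in> carrier_vec nc" "v \<noteq> 0\<^sub>v nc" "A *\<^sub>v v = 0\<^sub>v nr"
      using vec_space.lin_depE[OF A _ dist] by blast
    have "v $ j = 0" if jn: "j < nc" for j
    proof -
      obtain k where k: "k < nr" "A $$ (k, j) \<noteq> 0" "\<forall>j'<nc. j' \<noteq> j \<longrightarrow> A $$ (k, j') = 0"
        using H[OF jn] by blast
      have "(A *\<^sub>v v) $ k = (\<Sum>l\<in>{0..<nc}. A $$ (k, l) * v $ l)"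
        using A v(1) k by (simp add: scalar_prod_def mult.commute)
      also have "\<dots> = (\<Sum>l\<in>{0..<nc}. if l = j then A $$ (k, j) * v $ j else 0)"
        by (rule sum.cong) (use k in auto)
      also have "\<dots> = A $$ (k, j) * v $ j" using jn by simp
      finally show ?thesis using v k by simp
    qed
    then show False using v by (auto simp: vec_eq_iff)
  qed
  show ?thesis by (rule vec_space.lin_indpt_full_rank[OF A dist li])
qed


lemma offs_Suc: "offs G (Suc i) = offs G i + card (G i)"
  by (simp add: offs_def)

lemma offs_mono: "i \<le> i' \<Longrightarrow> offs G i \<le> offs G i'"
  unfolding offs_def by (rule sum_mono2) auto

lemma blk_disj: "k \<in> blk G i \<Longrightarrow> k \<in> blk G i' \<Longrightarrow> i = i'"
proof (rule ccontr)
  assume a: "k \<in> blk G i" "k \<in> blk G i'" "i \<noteq> i'"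
  show False
  proof (cases "i < i'")
    case True
    then have "offs G (Suc i) \<le> offs G i'" by (intro offs_mono) auto
    then show False using a by (auto simp: blk_def offs_Suc)
  next
    case False
    then have "offs G (Suc i') \<le> offs G i" using a(3) by (intro offs_mono) auto
    then show False using a by (auto simp: blk_def offs_Suc)
  qed
qed

lemma blk_exists: "k < offs G N \<Longrightarrow> \<exists>i<N. k \<in> blk G i"
proof (induction N)
  case 0 then show ?case by (simp add: offs_def)
next
  case (Suc N)
  show ?case
  proof (cases "k < offs G N")
    case True then show ?thesis using Suc.IH by (meson less_SucI)
  next
    case False then show ?thesis using Suc.prems by (auto simp: blk_def offs_Suc)
  qed
qed

lemma blk_bound: "i < N \<Longrightarrow> k \<in> blk G i \<Longrightarrow> k < offs G N"
proof -
  assume "i < N" "k \<in> blk G i"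
  then have "offs G (Suc i) \<le> offs G N" by (intro offs_mono) auto
  then show ?thesis using \<open>k \<in> blk G i\<close> by (auto simp: blk_def offs_Suc)
qed

lemma L_entry:
  assumes "i < N" "k \<in> blk G i" "j < n"
  shows "lift_mat n N G w $$ (k, j) = (if j = sorted_list_of_set (G i) ! (k - offs G i) then w i else 0)"
proof -
  have kp: "k < offs G N" using blk_bound assms by blast
  have "lift_mat n N G w $$ (k, j) = (\<Sum>i'<N. (if k \<in> blk G i' \<and> j = sorted_list_of_set (G i') ! (k - offs G i') then w i' else 0))"
    using kp assms(3) by (simp add: lift_mat_def)
  also have "\<dots> = (\<Sum>i'<N. if i' = i then (if j = sorted_list_of_set (G i) ! (k - offs G i) then w i else 0) else 0)"
    by (rule sum.cong) (use assms blk_disj in auto)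
  also have "\<dots> = (if j = sorted_list_of_set (G i) ! (k - offs G i) then w i else 0)"
    using assms(1) by simp
  finally show ?thesis .
qed

lemma L_carrier: "lift_mat n N G w \<in> carrier_mat (offs G N) n"
  by (simp add: lift_mat_def)

lemma sl_facts:
  assumes "finite S"
  shows "length (sorted_list_of_set S) = card S" "set (sorted_list_of_set S) = S"
    "distinct (sorted_list_of_set S)"
  using assms by auto

lemma Lx_entry:
  assumes "i < N" "k \<in> blk G i" "x \<in> carrier_vec n" "G i \<subseteq> {0..<n}"
  shows "(lift_mat n N G w *\<^sub>v x) $ k = w i * x $ (sorted_list_of_set (G i) ! (k - offs G i))"
proof -
  define j where "j = sorted_list_of_set (G i) ! (k - offs G i)"
  have fin: "finite (G i)" using assms(4) finite_subset by blast
  have "k - offs G i < card (G i)" using assms(2) by (auto simp: blk_def)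
  then have "j \<in> G i" unfolding j_def using sl_facts[OF fin] by (metis nth_mem)
  then have jn: "j < n" using assms(4) by auto
  have kp: "k < offs G N" using blk_bound assms by blast
  have "(lift_mat n N G w *\<^sub>v x) $ k = (\<Sum>l\<in>{0..<n}. lift_mat n N G w $$ (k, l) * x $ l)"
    using kp assms(3) L_carrier[of n N G w] by (simp add: scalar_prod_def mult.commute)
  also have "\<dots> = (\<Sum>l\<in>{0..<n}. if l = j then w i * x $ j else 0)"
    by (rule sum.cong) (use assms in \<open>auto simp: L_entry j_def\<close>)
  also have "\<dots> = w i * x $ j" using jn by simp
  finally show ?thesis unfolding j_def .
qed


theorem proposition3p2:
  fixes n N :: nat and G :: "nat \<Rightarrow> nat set" and w :: "nat \<Rightarrow> real" and x :: "real vec"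
  assumes grp_ne: "\<forall>i<N. G i \<noteq> {}"
    and grp_sub: "\<forall>i<N. G i \<subseteq> {0..<n}"
    and grp_cover: "(\<Union>i<N. G i) = {0..<n}"
    and w_pos: "\<forall>i<N. w i > 0"
    and x_dim: "x \<in> carrier_vec n"
  defines "L \<equiv> lift_mat n N G w"
    and "PTz \<equiv> coord_proj (offs G N) (Ez_set N G x)"
    and "PTxperp \<equiv> coord_proj n ({0..<n} - Ex_set n N G x)"
  defines "Lhat \<equiv> L - PTz * L * PTxperp"
  shows "full_column_rank Lhat \<and>
    (\<forall>u \<in> subdiff12 N G (L *\<^sub>v x).
        transpose_mat (PTz * L * PTxperp) *\<^sub>v u = 0\<^sub>v n \<and>
        transpose_mat L *\<^sub>v u = transpose_mat Lhat *\<^sub>v u)"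
proof -
  define p where "p = offs G N"
  define M where "M = PTz * L * PTxperp"
  define s where "s = (\<lambda>i. sorted_list_of_set (G i))"
  have Lc: "L \<in> carrier_mat p n" unfolding L_def p_def by (rule L_carrier)
  have Mc: "M \<in> carrier_mat p n" unfolding M_def PTz_def PTxperp_def
    using mult_carrier_mat[OF mult_carrier_mat[OF cp_carrier Lc] cp_carrier] p_def by simp
  have Lhc: "Lhat \<in> carrier_mat p n" unfolding Lhat_def using Mc unfolding M_def by (rule minus_carrier_mat)
  have fin: "finite (G i)" if "i < N" for i using grp_sub that finite_subset by blast
  have M_entry: "M $$ (k, j) = (if k \<in> Ez_set N G x \<and> j \<notin> Ex_set n N G x then L $$ (k, j) else 0)"
    if "k < p" "j < n" for k j
  proof -
    have "M $$ (k, j) = (if j \<in> {0..<n} - Ex_set n N G x then (PTz * L) $$ (k, j) else 0)"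
      unfolding M_def PTxperp_def
      by (rule cp_right) (use that mult_carrier_mat[OF cp_carrier Lc] in \<open>auto simp: PTz_def p_def\<close>)
    also have "\<dots> = (if k \<in> Ez_set N G x \<and> j \<notin> Ex_set n N G x then L $$ (k, j) else 0)"
      unfolding PTz_def p_def[symmetric] using cp_left[OF Lc that] that by auto
    finally show ?thesis .
  qed
  have Lh_entry: "Lhat $$ (k, j) = L $$ (k, j) - M $$ (k, j)" if "k < p" "j < n" for k j
    unfolding Lhat_def M_def[symmetric] using that Lc Mc by auto
  have blkE: "\<exists>i<N. k \<in> blk G i" if "k < p" for k using blk_exists that p_def by blast
  have inEz: "i \<in> active_grps N G x" if kk: "k \<in> Ez_set N G x" "k \<in> blk G i" for k i
  proof -
    obtain t where "t \<in> active_grps N G x" "k \<in> blk G t" using kk(1) unfolding Ez_set_def by blast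
    then show ?thesis using blk_disj[OF kk(2)] by metis
  qed
  have notEx: "\<exists>t<N. t \<notin> active_grps N G x \<and> j \<in> G t" if "j < n" "j \<notin> Ex_set n N G x" for j
    using that unfolding Ex_set_def by auto
  have rank: "full_column_rank Lhat"
  proof -
    have "vec_space.rank p Lhat = n"
    proof (rule full_rank_crit[OF Lhc])
      fix j assume jn: "j < n"
      have "\<exists>i. i < N \<and> j \<in> G i \<and> (j \<notin> Ex_set n N G x \<longrightarrow> i \<notin> active_grps N G x)"
      proof (cases "j \<in> Ex_set n N G x")
        case True
        have "j \<in> (\<Union>i<N. G i)" using grp_cover jn by simp
        then show ?thesis using True by blast
      next
        case False
        then show ?thesis using notEx[OF jn False] by blast
      qed
      then obtain i where i: "i < N" "j \<in> G i" "j \<notin> Ex_set n N G x \<Longrightarrow> i \<notin> active_grps N G x"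
        by blast
      obtain m where m: "m < card (G i)" "s i ! m = j"
        using i(2) sl_facts[OF fin[OF i(1)]] unfolding s_def by (metis in_set_conv_nth)
      define k where "k = offs G i + m"
      have kb: "k \<in> blk G i" using m by (simp add: k_def blk_def)
      have kp: "k < p" using blk_bound[OF i(1) kb] p_def by simp
      have L_k: "L $$ (k, j') = (if j' = j then w i else 0)" if "j' < n" for j'
        using L_entry[OF i(1) kb that, of w] m unfolding L_def s_def k_def by auto
      have M0: "M $$ (k, j) = 0"
        using M_entry[OF kp jn] inEz[OF _ kb] i(3) by auto
      show "\<exists>k<p. Lhat $$ (k, j) \<noteq> 0 \<and> (\<forall>j'<n. j' \<noteq> j \<longrightarrow> Lhat $$ (k, j') = 0)"
      proof (intro exI conjI allI impI)
        show "k < p" by (rule kp)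
        show "Lhat $$ (k, j) \<noteq> 0" using Lh_entry[OF kp jn] M0 L_k[OF jn] w_pos i(1) by auto
        fix j' assume "j' < n" "j' \<noteq> j"
        then show "Lhat $$ (k, j') = 0" using Lh_entry[OF kp] M_entry[OF kp] L_k by auto
      qed
    qed
    then show ?thesis unfolding full_column_rank_def using Lhc p_def by simp
  qed
  have term0: "M $$ (k, j) * u $ k = 0" if u: "u \<in> subdiff12 N G (L *\<^sub>v x)" and kj: "k < p" "j < n" for u k j
  proof (cases "k \<in> Ez_set N G x \<and> j \<notin> Ex_set n N G x \<and> L $$ (k, j) \<noteq> 0")
    case False then show ?thesis using M_entry[OF kj] by auto
  next
    case True
    obtain i where i: "i < N" "k \<in> blk G i" using blkE[OF kj(1)] by blast
    have act: "i \<in> active_grps N G x" using inEz True i by blast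
    have jeq: "j = s i ! (k - offs G i)" using True L_entry[OF i kj(2), of w] unfolding L_def s_def
      by (auto split: if_splits)
    obtain t where t: "t < N" "t \<notin> active_grps N G x" "j \<in> G t" using notEx kj True by blast
    have xj: "x $ j = 0" using t unfolding active_grps_def by auto
    have Lxk: "(L *\<^sub>v x) $ k = 0"
      using Lx_entry[OF i x_dim, of w] grp_sub i xj jeq unfolding L_def s_def by auto
    obtain j0 where j0: "j0 \<in> G i" "x $ j0 \<noteq> 0" using act unfolding active_grps_def by auto
    obtain m where m: "m < card (G i)" "s i ! m = j0"
      using j0(1) sl_facts[OF fin[OF i(1)]] unfolding s_def by (metis in_set_conv_nth)
    have k0: "offs G i + m \<in> blk G i" using m by (simp add: blk_def)
    have "(L *\<^sub>v x) $ (offs G i + m) \<noteq> 0"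
      using Lx_entry[OF i(1) k0 x_dim, of w] grp_sub i m j0 w_pos unfolding L_def s_def by auto
    then have ex: "\<exists>k'\<in>blk G i. (L *\<^sub>v x) $ k' \<noteq> 0" using k0 by blast
    have "u $ k = 0" using u i ex Lxk unfolding subdiff12_def by auto
    then show ?thesis by simp
  qed
  have part2: "transpose_mat M *\<^sub>v u = 0\<^sub>v n \<and> transpose_mat L *\<^sub>v u = transpose_mat Lhat *\<^sub>v u"
    if u: "u \<in> subdiff12 N G (L *\<^sub>v x)" for u
  proof
    have uc: "u \<in> carrier_vec p" using u unfolding subdiff12_def p_def by auto
    show "transpose_mat M *\<^sub>v u = 0\<^sub>v n"
    proof (rule eq_vecI)
      fix j assume "j < dim_vec (0\<^sub>v n :: real vec)"
      then have jn: "j < n" by simp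
      have "(transpose_mat M *\<^sub>v u) $ j = (\<Sum>k\<in>{0..<p}. M $$ (k, j) * u $ k)"
        using Mc jn uc by (simp add: scalar_prod_def)
      also have "\<dots> = 0" by (rule sum.neutral) (use term0[OF u _ jn] in auto)
      finally show "(transpose_mat M *\<^sub>v u) $ j = 0\<^sub>v n $ j" using jn by simp
    qed (use Mc in auto)
    show "transpose_mat L *\<^sub>v u = transpose_mat Lhat *\<^sub>v u"
    proof (rule eq_vecI)
      fix j assume "j < dim_vec (transpose_mat Lhat *\<^sub>v u)"
      then have jn: "j < n" using Lhc by simp
      have "(transpose_mat L *\<^sub>v u) $ j = (\<Sum>k\<in>{0..<p}. L $$ (k, j) * u $ k)"
        using Lc jn uc by (simp add: scalar_prod_def)
      also have "\<dots> = (\<Sum>k\<in>{0..<p}. Lhat $$ (k, j) * u $ k)"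
      proof (rule sum.cong)
        fix k assume "k \<in> {0..<p}"
        then have kp: "k < p" by simp
        have "Lhat $$ (k, j) * u $ k = L $$ (k, j) * u $ k - M $$ (k, j) * u $ k"
          using Lh_entry[OF kp jn] by (simp add: left_diff_distrib)
        then show "L $$ (k, j) * u $ k = Lhat $$ (k, j) * u $ k" using term0[OF u kp jn] by linarith
      qed simp
      also have "\<dots> = (transpose_mat Lhat *\<^sub>v u) $ j"
        using Lhc jn uc by (simp add: scalar_prod_def)
      finally show "(transpose_mat L *\<^sub>v u) $ j = (transpose_mat Lhat *\<^sub>v u) $ j" .
    qed (use Lc Lhc in auto)
  qed
  show ?thesis using rank part2 unfolding M_def by blast
qed

end
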